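(* Consider the Waterfilling Mechanism (with exact bucketing) described in the context. Let $S$ be any nonempty finite set of analysts and let $j \notin S$ be a further analyst, each analyst $l$ having a workload $W_l \in \mathbb{R}^{m_l\times n}$, a weight $s_l>0$ and a selected strategy matrix $A_l$ satisfying $W_l = W_l A_l^+ A_l$ and having every column of $A_l$ of $L_1$ norm $1$. Then for every analyst $i \in S$, $$\mathrm{Err}_i\big(S\cup\{j\}\big) \le \mathrm{Err}_i(S),$$ i.e. adding an analyst to the collective cannot increase the expected error of any analyst.
   Context: Data are a vector $x\in\mathbb{R}^n$. Fix $\varepsilon>0$. Each analyst $l$ has a workload matrix $W_l$ (a set of linear queries), a weight $s_l>0$ (analyst $l$ is entitled to privacy budget $s_l\varepsilon$), and a strategy matrix $A_l$ produced for $W_l$ alone by a selection step (it depends only on $W_l$), satisfying $W_l = W_lA_l^+A_l$ (where $^+$ denotes the Moore–Penrose pseudo-inverse) and every column of $A_l$ having $L_1$ norm $1$. Fix a norm $\|\cdot\|$ on row vectors. Waterfilling Mechanism for a collective $S$ of analysts: maintain a set $B$ of buckets, each a unit vector $e$ with a weight $f_B(e)>0$, initially empty. For each $l\in S$ and each nonzero row $v$ of $s_lA_l$, let $e=v/\|v\|$; if $e\in B$, increase $f_B(e)$ by $\|v\|$, otherwise add $e$ to $B$ with $f_B(e)=\|v\|$. The joint strategy $A$ has one row $f_B(e)\,e$ for each $e\in B$. With total budget $\varepsilon_S=\big(\sum_{l\in S}s_l\big)\varepsilon$, the mechanism releases $y=Ax+\eta$ where $\eta$ has i.i.d. Laplace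 entries of scale $\|A\|_1/\varepsilon_S$, with $\|A\|_1$ the maximum $L_1$ norm of a column of $A$ (the $L_1$ sensitivity). Analyst $i$ estimates $W_ix$ by $W_iA^+y$. The expected error of analyst $i$ in collective $S$ is $\mathrm{Err}_i(S)=\mathbb{E}\|W_ix-W_iA^+y\|_2^2 = \frac{2\|A\|_1^2}{\varepsilon_S^2}\|W_iA^+\|_F^2$. *)

theory Defs
  imports "Jordan_Normal_Form.Matrix"
begin

definition is_pinv :: "real mat \<Rightarrow> real mat \<Rightarrow> bool" where
  "is_pinv A X \<longleftrightarrow> X \<in> carrier_mat (dim_col A) (dim_row A)
     \<and> A * X * A = A \<and> X * A * X = X
     \<and> transpose_mat (A * X) = A * X \<and> transpose_mat (X * A) = X * A"

definition pinv :: "real mat \<Rightarrow> real mat" where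
  "pinv A = (THE X. is_pinv A X)"

definition col_L1 :: "real mat \<Rightarrow> nat \<Rightarrow> real" where
  "col_L1 M c = (\<Sum>r<dim_row M. \<bar>M $$ (r, c)\<bar>)"

definition L1_sens :: "real mat \<Rightarrow> real" where
  "L1_sens M = Max {col_L1 M c | c. c < dim_col M}"

definition frob_sq :: "real mat \<Rightarrow> real" where
  "frob_sq M = (\<Sum>r<dim_row M. \<Sum>c<dim_col M. (M $$ (r, c))\<^sup>2)"

definition is_row_norm :: "nat \<Rightarrow> (real vec \<Rightarrow> real) \<Rightarrow> bool" where
  "is_row_norm n N \<longleftrightarrow>
     (\<forall>v \<in> carrier_vec n. 0 \<le> N v \<and> (N v = 0 \<longleftrightarrow> v = 0\<^sub>v n)) \<and>
     (\<forall>v \<in> carrier_vec n. \<forall>c. N (c \<cdot>\<^sub>v v) = \<bar>c\<bar> * N v) \<and>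
     (\<forall>u \<in> carrier_vec n. \<forall>v \<in> carrier_vec n. N (u + v) \<le> N u + N v)"

definition wf_rows :: "('a \<Rightarrow> real) \<Rightarrow> ('a \<Rightarrow> real mat) \<Rightarrow> 'a set \<Rightarrow> ('a \<times> nat) set" where
  "wf_rows s A S = {(l, k). l \<in> S \<and> k < dim_row (A l)
       \<and> row (s l \<cdot>\<^sub>m A l) k \<noteq> 0\<^sub>v (dim_col (A l))}"

definition wf_vec :: "('a \<Rightarrow> real) \<Rightarrow> ('a \<Rightarrow> real mat) \<Rightarrow> 'a \<times> nat \<Rightarrow> real vec" where
  "wf_vec s A p = row (s (fst p) \<cdot>\<^sub>m A (fst p)) (snd p)"

definition wf_dir :: "(real vec \<Rightarrow> real) \<Rightarrow> ('a \<Rightarrow> real) \<Rightarrow> ('a \<Rightarrow> real mat) \<Rightarrow> 'a \<times> nat \<Rightarrow> real vec" where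
  "wf_dir N s A p = (1 / N (wf_vec s A p)) \<cdot>\<^sub>v wf_vec s A p"

definition wf_buckets :: "(real vec \<Rightarrow> real) \<Rightarrow> ('a \<Rightarrow> real) \<Rightarrow> ('a \<Rightarrow> real mat) \<Rightarrow> 'a set \<Rightarrow> real vec set" where
  "wf_buckets N s A S = wf_dir N s A ` wf_rows s A S"

definition wf_weight :: "(real vec \<Rightarrow> real) \<Rightarrow> ('a \<Rightarrow> real) \<Rightarrow> ('a \<Rightarrow> real mat) \<Rightarrow> 'a set \<Rightarrow> real vec \<Rightarrow> real" where
  "wf_weight N s A S e = (\<Sum>p \<in> {p \<in> wf_rows s A S. wf_dir N s A p = e}. N (wf_vec s A p))"

text \<open>Joint strategy: one row f_B(e) e per bucket e (in some fixed enumeration of B;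
  the error is independent of the row order).\<close>
definition joint_strategy :: "nat \<Rightarrow> (real vec \<Rightarrow> real) \<Rightarrow> ('a \<Rightarrow> real) \<Rightarrow> ('a \<Rightarrow> real mat) \<Rightarrow> 'a set \<Rightarrow> real mat" where
  "joint_strategy n N s A S =
     (let es = (SOME es. distinct es \<and> set es = wf_buckets N s A S)
      in mat_of_rows n (map (\<lambda>e. wf_weight N s A S e \<cdot>\<^sub>v e) es))"

definition wf_err :: "nat \<Rightarrow> (real vec \<Rightarrow> real) \<Rightarrow> real \<Rightarrow> ('a \<Rightarrow> real) \<Rightarrow> ('a \<Rightarrow> real mat)
      \<Rightarrow> ('a \<Rightarrow> real mat) \<Rightarrow> 'a set \<Rightarrow> 'a \<Rightarrow> real" where
  "wf_err n N \<epsilon> s W A S i =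
     (let AJ = joint_strategy n N s A S; \<epsilon>S = (\<Sum>l\<in>S. s l) * \<epsilon>
      in 2 * (L1_sens AJ)\<^sup>2 / \<epsilon>S\<^sup>2 * frob_sq (W i * pinv AJ))"

end

theory Submission
  imports Defs
begin


definition outer :: "real vec \<Rightarrow> real vec \<Rightarrow> real mat" where
  "outer u v = mat (dim_vec u) (dim_vec v) (\<lambda>(i,j). u$i * v$j)"

lemma outer_carrier[simp]: "outer u v \<in> carrier_mat (dim_vec u) (dim_vec v)"
  unfolding outer_def by auto

lemma outer_index[simp]: "i < dim_vec u \<Longrightarrow> j < dim_vec v \<Longrightarrow> outer u v $$ (i,j) = u$i * v$j"
  "dim_row (outer u v) = dim_vec u" "dim_col (outer u v) = dim_vec v"
  unfolding outer_def by auto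

lemma mult_outer: assumes "A \<in> carrier_mat r m" "u \<in> carrier_vec m"
  shows "A * outer u v = outer (A *\<^sub>v u) v"
  using assms by (intro eq_matI) (auto simp: scalar_prod_def sum_distrib_right mult.assoc)

lemma outer_mult: assumes "B \<in> carrier_mat k c" "v \<in> carrier_vec k"
  shows "outer u v * B = outer u (transpose_mat B *\<^sub>v v)"
  using assms by (intro eq_matI) (auto simp: scalar_prod_def sum_distrib_left ac_simps mult.left_commute)

lemma transpose_outer: "transpose_mat (outer u v) = outer v u"
  by (intro eq_matI) auto

lemma outer_mult_vec: assumes "v \<in> carrier_vec k" "x \<in> carrier_vec k"
  shows "outer u v *\<^sub>v x = (v \<bullet> x) \<cdot>\<^sub>v u"
  using assms by (intro eq_vecI) (auto simp: scalar_prod_def sum_distrib_left ac_simps mult.left_commute)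

lemma outer_zero: "outer (0\<^sub>v m) v = 0\<^sub>m m (dim_vec v)"
  by (intro eq_matI) auto

lemma outer_smult: "outer u (c \<cdot>\<^sub>v v) = c \<cdot>\<^sub>m outer u v"
  by (intro eq_matI) auto

lemma self_scalar_pos: fixes w :: "real vec"
  assumes "w \<in> carrier_vec m" "w \<noteq> 0\<^sub>v m" shows "w \<bullet> w > 0"
proof -
  from assms obtain i where i: "i < m" "w $ i \<noteq> 0"
    by (metis carrier_vecD eq_vecI index_zero_vec(1,2))
  have "w \<bullet> w = (\<Sum>l\<in>{0..<m}. (w$l)^2)" using assms by (auto simp: scalar_prod_def power2_eq_square)
  also have "\<dots> \<ge> (w$i)^2" using i by (intro member_le_sum) auto
  finally show ?thesis using i by (smt (verit) zero_less_power2)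
qed


lemma proj_aux:
  fixes A :: "real mat"
  assumes A: "A \<in> carrier_mat m n" and k: "k \<le> n"
  shows "\<exists>X \<in> carrier_mat n m. transpose_mat (A*X) = A*X \<and> A*X*(A*X) = A*X
     \<and> (\<forall>c<k. (A*X) *\<^sub>v col A c = col A c)"
  using k
proof (induction k)
  case 0
  show ?case by (intro bexI[of _ "0\<^sub>m n m"]) (use A in auto)
next
  case (Suc k)
  then obtain X where X: "X \<in> carrier_mat n m" and sym: "transpose_mat (A*X) = A*X"
    and idem: "A*X*(A*X) = A*X" and cols: "\<forall>c<k. (A*X) *\<^sub>v col A c = col A c" by auto
  define P where "P = A*X"
  have P: "P \<in> carrier_mat m m" using A X P_def by auto
  have PP: "P * P = P" using idem P_def by simp
  have symP: "transpose_mat P = P" using sym P_def by simp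
  define a where "a = col A k"
  have a: "a \<in> carrier_vec m" using A a_def by auto
  define w where "w = a - P *\<^sub>v a"
  have w: "w \<in> carrier_vec m" using a P w_def by auto
  have Pw: "P *\<^sub>v w = 0\<^sub>v m"
  proof -
    have "P *\<^sub>v w = P *\<^sub>v a - P *\<^sub>v (P *\<^sub>v a)" unfolding w_def
      using P a by (simp add: mult_minus_distrib_mat_vec)
    also have "P *\<^sub>v (P *\<^sub>v a) = (P * P) *\<^sub>v a" using P a by simp
    also note PP
    finally show ?thesis using P a by auto
  qed
  have wP: "w \<bullet> (P *\<^sub>v b) = 0" if b: "b \<in> carrier_vec m" for b
  proof -
    have "w \<bullet> (P *\<^sub>v b) = (transpose_mat P *\<^sub>v w) \<bullet> b"
      using transpose_vec_mult_scalar[OF P b w] by simp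
    also have "\<dots> = 0" using symP Pw b by simp
    finally show ?thesis .
  qed
  show ?case
  proof (cases "w = 0\<^sub>v m")
    case True
    have Pa: "P *\<^sub>v a = a"
    proof (rule eq_vecI)
      fix i assume i: "i < dim_vec a"
      then have "w $ i = 0" using True a by simp
      then show "(P *\<^sub>v a) $ i = a $ i" using i a P unfolding w_def by simp
    qed (use P a in simp)
    have "\<forall>c<Suc k. (A*X) *\<^sub>v col A c = col A c"
    proof (intro allI impI)
      fix c assume "c < Suc k"
      then consider "c < k" | "c = k" by linarith
      then show "(A*X) *\<^sub>v col A c = col A c"
      proof cases
        case 1 then show ?thesis using cols by blast
      next
        case 2 then show ?thesis using Pa unfolding P_def a_def by simp
      qed
    qed
    then show ?thesis using X sym idem by blast
  next
    case False
    define d where "d = w \<bullet> w"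
    have d: "d > 0" using self_scalar_pos[OF w False] d_def by simp
    define X' where "X' = X + (1/d) \<cdot>\<^sub>m outer (unit_vec n k - X *\<^sub>v a) w"
    have X': "X' \<in> carrier_mat n m" using X w unfolding X'_def by auto
    define Om where "Om = outer w w"
    have Om: "Om \<in> carrier_mat m m" using w Om_def by auto
    have AX': "A * X' = P + (1/d) \<cdot>\<^sub>m Om"
    proof -
      have o1: "outer (unit_vec n k - X *\<^sub>v a) w \<in> carrier_mat n m" using X w by auto
      have "A * X' = A * X + A * ((1/d) \<cdot>\<^sub>m outer (unit_vec n k - X *\<^sub>v a) w)"
        unfolding X'_def using A X o1 by (simp add: mult_add_distrib_mat)
      also have "A * ((1/d) \<cdot>\<^sub>m outer (unit_vec n k - X *\<^sub>v a) w)
           = (1/d) \<cdot>\<^sub>m (A * outer (unit_vec n k - X *\<^sub>v a) w)"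
        using A o1 by (simp add: mult_smult_distrib)
      also have "A * outer (unit_vec n k - X *\<^sub>v a) w = outer (A *\<^sub>v (unit_vec n k - X *\<^sub>v a)) w"
        by (rule mult_outer[OF A]) (use X a in auto)
      also have "A *\<^sub>v (unit_vec n k - X *\<^sub>v a) = A *\<^sub>v unit_vec n k - A *\<^sub>v (X *\<^sub>v a)"
        using A X a by (simp add: mult_minus_distrib_mat_vec)
      also have "A *\<^sub>v unit_vec n k = a" unfolding a_def using A Suc.prems
        by (intro eq_vecI) (auto simp: scalar_prod_def if_distrib cong: if_cong)
      also have "A *\<^sub>v (X *\<^sub>v a) = P *\<^sub>v a" unfolding P_def using A X a by simp
      finally show ?thesis unfolding P_def[symmetric] Om_def w_def[symmetric] .
    qed
    have PO: "P * Om = 0\<^sub>m m m" unfolding Om_def using mult_outer[OF P w, of w] Pw outer_zero w by auto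
    have OP: "Om * P = 0\<^sub>m m m" unfolding Om_def using outer_mult[OF P w, of w] sym Pw outer_zero w symP by auto
    have OO: "Om * Om = d \<cdot>\<^sub>m Om" unfolding Om_def
      using outer_mult[OF Om[unfolded Om_def] w, of w] transpose_outer[of w w] outer_mult_vec[OF w w]
      outer_smult d_def by simp
    have sym': "transpose_mat (P + (1/d) \<cdot>\<^sub>m Om) = P + (1/d) \<cdot>\<^sub>m Om"
      using symP P Om unfolding Om_def by (subst transpose_add[of _ m m]) (auto simp: transpose_outer)
    have idem': "(P + (1/d) \<cdot>\<^sub>m Om) * (P + (1/d) \<cdot>\<^sub>m Om) = P + (1/d) \<cdot>\<^sub>m Om"
    proof -
      have c1: "(1/d) \<cdot>\<^sub>m Om \<in> carrier_mat m m" using Om by simp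
      have c2: "P + (1/d) \<cdot>\<^sub>m Om \<in> carrier_mat m m" using Om P by simp
      have "(P + (1/d) \<cdot>\<^sub>m Om) * (P + (1/d) \<cdot>\<^sub>m Om)
         = P * (P + (1/d) \<cdot>\<^sub>m Om) + (1/d) \<cdot>\<^sub>m Om * (P + (1/d) \<cdot>\<^sub>m Om)"
        by (rule add_mult_distrib_mat[OF P c1 c2])
      also have "\<dots> = P * P + P * ((1/d) \<cdot>\<^sub>m Om) + ((1/d) \<cdot>\<^sub>m Om * P + (1/d) \<cdot>\<^sub>m Om * ((1/d) \<cdot>\<^sub>m Om))"
        using mult_add_distrib_mat[OF P P c1] mult_add_distrib_mat[OF c1 P c1] by simp
      also have "P * ((1/d) \<cdot>\<^sub>m Om) = 0\<^sub>m m m" using mult_smult_distrib[OF P Om] PO by simp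
      also have "(1/d) \<cdot>\<^sub>m Om * P = 0\<^sub>m m m" using mult_smult_assoc_mat[OF Om P] OP by simp
      also have "(1/d) \<cdot>\<^sub>m Om * ((1/d) \<cdot>\<^sub>m Om) = (1/d) \<cdot>\<^sub>m Om"
      proof -
        have "(1/d) \<cdot>\<^sub>m Om * ((1/d) \<cdot>\<^sub>m Om) = (1/d) \<cdot>\<^sub>m ((1/d) \<cdot>\<^sub>m (Om * Om))"
          using mult_smult_assoc_mat[OF Om c1] mult_smult_distrib[OF Om Om] by simp
        also have "\<dots> = (1/d) \<cdot>\<^sub>m Om" unfolding OO using Om d by (intro eq_matI) auto
        finally show ?thesis .
      qed
      also have "P * P + 0\<^sub>m m m + (0\<^sub>m m m + (1/d) \<cdot>\<^sub>m Om) = P + (1/d) \<cdot>\<^sub>m Om"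
        unfolding PP using P Om by (intro eq_matI) auto
      finally show ?thesis .
    qed
    have colk: "(P + (1/d) \<cdot>\<^sub>m Om) *\<^sub>v b = P *\<^sub>v b + ((1/d) * (w \<bullet> b)) \<cdot>\<^sub>v w"
      if b: "b \<in> carrier_vec m" for b
    proof -
      have "(P + (1/d) \<cdot>\<^sub>m Om) *\<^sub>v b = P *\<^sub>v b + ((1/d) \<cdot>\<^sub>m Om) *\<^sub>v b"
        using P Om b by (simp add: add_mult_distrib_mat_vec)
      also have "((1/d) \<cdot>\<^sub>m Om) *\<^sub>v b = (1/d) \<cdot>\<^sub>v (Om *\<^sub>v b)" using Om b
        by (intro eq_vecI) (auto simp: scalar_prod_def sum_distrib_left ac_simps)
      also have "Om *\<^sub>v b = (w \<bullet> b) \<cdot>\<^sub>v w" unfolding Om_def using outer_mult_vec[OF w b] .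
      finally show ?thesis by (simp add: smult_smult_assoc)
    qed
    have "\<forall>c<Suc k. (A*X') *\<^sub>v col A c = col A c"
    proof (intro allI impI)
      fix c assume c: "c < Suc k"
      have b: "col A c \<in> carrier_vec m" using A by auto
      show "(A*X') *\<^sub>v col A c = col A c"
      proof (cases "c = k")
        case True
        have wa: "w \<bullet> a = d"
        proof -
          have "a = w + P *\<^sub>v a" unfolding w_def using a P by (intro eq_vecI) auto
          then have "w \<bullet> a = w \<bullet> w + w \<bullet> (P *\<^sub>v a)"
            using scalar_prod_add_distrib[OF w w, of "P *\<^sub>v a"] P a by (metis mult_mat_vec_carrier)
          then show ?thesis using wP[OF a] d_def by simp
        qed
        have "(A*X') *\<^sub>v col A c = P *\<^sub>v a + ((1/d) * (w \<bullet> a)) \<cdot>\<^sub>v w"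
          unfolding AX' colk[OF b] using True a_def by simp
        also have "(1/d) * (w \<bullet> a) = 1" using wa d by simp
        also have "P *\<^sub>v a + 1 \<cdot>\<^sub>v w = a" unfolding w_def using a P by (intro eq_vecI) auto
        finally show ?thesis using True a_def by simp
      next
        case False
        then have "c < k" using c by simp
        then have Pb: "P *\<^sub>v col A c = col A c" using cols unfolding P_def by blast
        have "w \<bullet> col A c = 0" using wP[OF b] Pb by simp
        then show ?thesis unfolding AX' colk[OF b] using Pb b w A by (intro eq_vecI) auto
      qed
    qed
    then show ?thesis using X' AX' sym' idem' by (intro bexI[of _ X']) auto
  qed
qed


lemma proj_exists:
  fixes A :: "real mat"
  assumes A: "A \<in> carrier_mat m n"
  shows "\<exists>X \<in> carrier_mat n m. transpose_mat (A*X) = A*X \<and> A*X*(A*X) = A*X \<and> A*X*A = A"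
proof -
  obtain X where X: "X \<in> carrier_mat n m" and s: "transpose_mat (A*X) = A*X" and i: "A*X*(A*X) = A*X"
    and c: "\<forall>c<n. (A*X) *\<^sub>v col A c = col A c" using proj_aux[OF A le_refl] by blast
  have "A*X*A = A"
  proof (rule eq_matI)
    fix i j assume ij: "i < dim_row A" "j < dim_col A"
    have "(A*X*A) $$ (i,j) = row (A*X) i \<bullet> col A j" using A X ij by (intro index_mult_mat(1)) auto
    also have "\<dots> = ((A*X) *\<^sub>v col A j) $ i" using A X ij by (intro index_mult_mat_vec[symmetric]) auto
    also have "\<dots> = A $$ (i,j)" using c ij A by simp
    finally show "(A*X*A) $$ (i,j) = A $$ (i,j)" .
  qed (use A X in auto)
  then show ?thesis using X s i by blast
qed

lemma pinv_exists:
  fixes A :: "real mat"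
  shows "\<exists>X. is_pinv A X"
proof -
  define m n where "m = dim_row A" and "n = dim_col A"
  have A: "A \<in> carrier_mat m n" unfolding m_def n_def by auto
  have At: "transpose_mat A \<in> carrier_mat n m" using A by simp
  obtain X0 where X0: "X0 \<in> carrier_mat n m" and s0: "transpose_mat (A*X0) = A*X0"
    and i0: "A*X0*(A*X0) = A*X0" and p0: "A*X0*A = A" using proj_exists[OF A] by blast
  obtain Z where Z: "Z \<in> carrier_mat m n" and s1: "transpose_mat (transpose_mat A*Z) = transpose_mat A*Z"
    and i1: "transpose_mat A*Z*(transpose_mat A*Z) = transpose_mat A*Z"
    and p1: "transpose_mat A*Z*transpose_mat A = transpose_mat A" using proj_exists[OF At] by blast
  define Q where "Q = transpose_mat A * Z"
  have Q: "Q \<in> carrier_mat n n" using Q_def Z At by simp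
  have Qt: "transpose_mat Q = Q" using s1 Q_def by simp
  have QQ: "Q * Q = Q" using i1 Q_def by simp
  have AQ: "A * Q = A"
  proof -
    have "transpose_mat (Q * transpose_mat A) = transpose_mat (transpose_mat A)" using p1 Q_def by simp
    then have "A * transpose_mat Q = A" using transpose_mult[OF Q At] by simp
    then show ?thesis using Qt by simp
  qed
  have QZ: "Q = transpose_mat Z * A"
  proof -
    have "Q = transpose_mat Q" using Qt by simp
    also have "\<dots> = transpose_mat Z * A" unfolding Q_def using transpose_mult[OF At Z] by simp
    finally show ?thesis .
  qed
  define X where "X = Q * X0"
  have X: "X \<in> carrier_mat n m" using X_def Q X0 by simp
  have AX: "A * X = A * X0" unfolding X_def using assoc_mult_mat[OF A Q X0] AQ by simp
  have XA: "X * A = Q"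
  proof -
    have "X * A = transpose_mat Z * A * X0 * A" unfolding X_def QZ ..
    also have "\<dots> = transpose_mat Z * A * (X0 * A)"
      using assoc_mult_mat[OF mult_carrier_mat[OF transpose_carrier_mat[THEN iffD2, OF Z] A] X0 A] .
    also have "\<dots> = transpose_mat Z * (A * (X0 * A))"
      using assoc_mult_mat[OF transpose_carrier_mat[THEN iffD2, OF Z] A mult_carrier_mat[OF X0 A]] .
    also have "A * (X0 * A) = A * X0 * A" using assoc_mult_mat[OF A X0 A] by simp
    also have "transpose_mat Z * (A * X0 * A) = Q" unfolding p0 by (rule QZ[symmetric])
    finally show ?thesis .
  qed
  have "A * X * A = A" using AX p0 by simp
  moreover have "X * A * X = X"
  proof -
    have "X * A * X = Q * X" using XA by simp
    also have "\<dots> = Q * Q * X0" unfolding X_def using assoc_mult_mat[OF Q Q X0] by simp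
    also have "\<dots> = X" using QQ X_def by simp
    finally show ?thesis .
  qed
  moreover have "transpose_mat (A * X) = A * X" using AX s0 by simp
  moreover have "transpose_mat (X * A) = X * A" using XA Qt by simp
  ultimately have "is_pinv A X" unfolding is_pinv_def using X m_def n_def by simp
  then show ?thesis by blast
qed

lemma pinv_unique:
  fixes A :: "real mat"
  assumes X: "is_pinv A X" and Y: "is_pinv A Y"
  shows "X = Y"
proof -
  define m n where "m = dim_row A" and "n = dim_col A"
  have A: "A \<in> carrier_mat m n" unfolding m_def n_def by auto
  have At: "transpose_mat A \<in> carrier_mat n m" using A by simp
  have Xc: "X \<in> carrier_mat n m" and Xt: "transpose_mat X \<in> carrier_mat m n"
    and x1: "A * X * A = A" and x2: "X * A * X = X"
    and x3: "transpose_mat (A * X) = A * X" and x4: "transpose_mat (X * A) = X * A"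
    using X unfolding is_pinv_def m_def n_def by auto
  have Yc: "Y \<in> carrier_mat n m" and Yt: "transpose_mat Y \<in> carrier_mat m n"
    and y1: "A * Y * A = A" and y2: "Y * A * Y = Y"
    and y3: "transpose_mat (A * Y) = A * Y" and y4: "transpose_mat (Y * A) = Y * A"
    using Y unfolding is_pinv_def m_def n_def by auto
  let ?Xt = "transpose_mat X" and ?At = "transpose_mat A" and ?Yt = "transpose_mat Y"
  have XXt: "X * ?Xt \<in> carrier_mat n n" using Xc Xt by simp
  have AY: "A * Y \<in> carrier_mat m m" using A Yc by simp
  have XA: "X * A \<in> carrier_mat n n" using A Xc by simp
  have YA: "Y * A \<in> carrier_mat n n" using A Yc by simp
  have e1: "X = X * ?Xt * ?At"
  proof -
    have "X = X * (A * X)" using x2 Xc A by (metis assoc_mult_mat)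
    also have "\<dots> = X * (?Xt * ?At)" using x3 transpose_mult[OF A Xc] by simp
    finally show ?thesis using Xc Xt At by (metis assoc_mult_mat)
  qed
  have e2: "?At = ?At * (A * Y)"
  proof -
    have "?At = transpose_mat (A * Y * A)" using y1 by simp
    also have "\<dots> = ?At * transpose_mat (A * Y)"
      using transpose_mult[of "A*Y" m m A n] A Yc by simp
    also have "\<dots> = ?At * (A * Y)" using y3 by simp
    finally show ?thesis .
  qed
  have "X * ?Xt * ?At = X * ?Xt * (?At * (A * Y))"
    using e2 by (rule arg_cong[where f="\<lambda>T. X * ?Xt * T"])
  with e1 have "X = X * ?Xt * (?At * (A * Y))" by (rule trans)
  also have "\<dots> = X * ?Xt * ?At * (A * Y)" using assoc_mult_mat[OF XXt At AY] by simp
  also have "\<dots> = X * (A * Y)" using e1 by simp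
  also have "\<dots> = X * A * Y" using Xc A Yc by (metis assoc_mult_mat)
  finally have ex: "X = X * A * Y" .
  have f1: "Y = ?At * ?Yt * Y"
  proof -
    have "Y = (Y * A) * Y" using y2 by simp
    also have "\<dots> = (?At * ?Yt) * Y" using y4 transpose_mult[OF Yc A] by simp
    finally show ?thesis .
  qed
  have f2: "?At = X * A * ?At"
  proof -
    have "?At = transpose_mat (A * X * A)" using x1 by simp
    also have "\<dots> = transpose_mat (A * (X * A))" using A Xc by (metis assoc_mult_mat)
    also have "\<dots> = transpose_mat (X * A) * ?At"
      using transpose_mult[OF A XA] by simp
    also have "\<dots> = X * A * ?At" using x4 by simp
    finally show ?thesis .
  qed
  have "?At * ?Yt * Y = X * A * ?At * ?Yt * Y"
    using f2 by (rule arg_cong[where f="\<lambda>T. T * ?Yt * Y"])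
  with f1 have "Y = X * A * ?At * ?Yt * Y" by (rule trans)
  also have "\<dots> = X * A * (?At * ?Yt) * Y"
    using assoc_mult_mat[OF XA At Yt] by simp
  also have "?At * ?Yt = Y * A" using y4 transpose_mult[OF Yc A] by simp
  also have "X * A * (Y * A) * Y = X * A * (Y * A * Y)"
    using assoc_mult_mat[OF XA YA Yc] by simp
  also have "\<dots> = X * A * Y" using y2 by simp
  finally have "Y = X * A * Y" .
  then show ?thesis using ex by simp
qed

lemma pinv_is_pinv: "is_pinv A (pinv A)"
  unfolding pinv_def by (rule theI') (use pinv_exists pinv_unique in blast)



lemma sum_nth_distinct:
  assumes "distinct xs"
  shows "(\<Sum>t<length xs. g (xs!t)) = (\<Sum>x\<in>set xs. g x)"
  using sum.reindex_bij_betw[OF bij_betw_nth[OF assms refl refl], of g] by simp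

lemma sum_single_nz:
  fixes a :: "'b \<Rightarrow> real"
  assumes "finite T" "t0 \<in> T" "\<And>t. t \<in> T \<Longrightarrow> t \<noteq> t0 \<Longrightarrow> a t = 0"
  shows "sum a T = a t0"
proof -
  have "sum a T = a t0 + sum a (T - {t0})" using assms by (simp add: sum.remove)
  also have "sum a (T - {t0}) = 0" using assms by (intro sum.neutral) auto
  finally show ?thesis by simp
qed

locale wf_setup =
  fixes n :: nat and N :: "real vec \<Rightarrow> real" and s :: "'a \<Rightarrow> real"
    and A :: "'a \<Rightarrow> real mat" and S :: "'a set"
  assumes norm: "is_row_norm n N" and finS: "finite S"
    and A_dim: "\<And>l. l \<in> S \<Longrightarrow> dim_col (A l) = n"
    and s_pos: "\<And>l. l \<in> S \<Longrightarrow> s l > 0"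
    and A_cols: "\<And>l c. l \<in> S \<Longrightarrow> c < n \<Longrightarrow> col_L1 (A l) c = 1"
begin

abbreviation "R \<equiv> wf_rows s A S"
abbreviation "B \<equiv> wf_buckets N s A S"
abbreviation "f \<equiv> wf_weight N s A S"
abbreviation "v \<equiv> wf_vec s A"
abbreviation "dir \<equiv> wf_dir N s A"
definition "es = (SOME es. distinct es \<and> set es = B)"
abbreviation "AJ \<equiv> joint_strategy n N s A S"

lemma R_sub: "R \<subseteq> (SIGMA l:S. {..<dim_row (A l)})"
  unfolding wf_rows_def by auto

lemma R_fin: "finite R"
  by (rule finite_subset[OF R_sub]) (use finS in auto)

lemma B_fin: "finite B"
  unfolding wf_buckets_def using R_fin by simp

lemma es: "distinct es" "set es = B"
proof -
  have "\<exists>es. distinct es \<and> set es = B" using finite_distinct_list[OF B_fin] by metis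
  from someI_ex[OF this] show "distinct es" "set es = B" unfolding es_def by auto
qed

lemma v_carrier: assumes "p \<in> R" shows "v p \<in> carrier_vec n"
proof -
  obtain l k where p: "p = (l,k)" "l \<in> S"
    using assms unfolding wf_rows_def by blast
  have "v p = row (s l \<cdot>\<^sub>m A l) k" unfolding wf_vec_def p(1) by simp
  moreover have "dim_vec (row (s l \<cdot>\<^sub>m A l) k) = n" using A_dim[OF p(2)] by simp
  ultimately show ?thesis unfolding carrier_vec_def by simp
qed

lemma v_nz: assumes "p \<in> R" shows "v p \<noteq> 0\<^sub>v n"
proof -
  obtain l k where p: "p = (l,k)" "l \<in> S" "row (s l \<cdot>\<^sub>m A l) k \<noteq> 0\<^sub>v (dim_col (A l))"
    using assms unfolding wf_rows_def by blast
  have "v p = row (s l \<cdot>\<^sub>m A l) k" unfolding wf_vec_def p(1) by simp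
  then show ?thesis using p(3) unfolding A_dim[OF p(2)] by simp
qed

lemma N_pos: assumes "u \<in> carrier_vec n" "u \<noteq> 0\<^sub>v n" shows "N u > 0"
proof -
  have h: "\<forall>v \<in> carrier_vec n. 0 \<le> N v \<and> (N v = 0 \<longleftrightarrow> v = 0\<^sub>v n)"
    using norm unfolding is_row_norm_def by (rule conjunct1)
  have "0 \<le> N u" "N u = 0 \<longleftrightarrow> u = 0\<^sub>v n" using bspec[OF h assms(1)] by auto
  then show ?thesis using assms(2) by linarith
qed

lemma N_nonneg: assumes "u \<in> carrier_vec n" shows "N u \<ge> 0"
proof -
  have h: "\<forall>v \<in> carrier_vec n. 0 \<le> N v \<and> (N v = 0 \<longleftrightarrow> v = 0\<^sub>v n)"
    using norm unfolding is_row_norm_def by (rule conjunct1)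
  show ?thesis using bspec[OF h assms(1)] by auto
qed

lemma Nv_pos: "p \<in> R \<Longrightarrow> N (v p) > 0"
  by (rule N_pos[OF v_carrier v_nz])

lemma dir_carrier: "p \<in> R \<Longrightarrow> dir p \<in> carrier_vec n"
  unfolding wf_dir_def smult_carrier_vec by (rule v_carrier)

lemma dir_idx: "p \<in> R \<Longrightarrow> c < n \<Longrightarrow> dir p $ c = v p $ c / N (v p)"
  unfolding wf_dir_def using carrier_vecD[OF v_carrier] by simp

lemma v_idx: assumes "(l,k) \<in> R" "c < n" shows "v (l,k) $ c = s l * A l $$ (k,c)"
proof -
  have "l \<in> S" "k < dim_row (A l)" using assms(1) unfolding wf_rows_def by simp_all
  then show ?thesis unfolding wf_vec_def using A_dim assms(2) by simp
qed

lemma B_carrier: "e \<in> B \<Longrightarrow> e \<in> carrier_vec n"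
  unfolding wf_buckets_def using dir_carrier by blast

lemma f_pos: assumes "e \<in> B" shows "f e > 0"
proof -
  from assms obtain p where p: "p \<in> R" "dir p = e" unfolding wf_buckets_def by blast
  have fin: "finite {p \<in> R. dir p = e}" using R_fin by simp
  have "f e = (\<Sum>q\<in>{p \<in> R. dir p = e}. N (v q))" unfolding wf_weight_def by simp
  also have "\<dots> > 0"
  proof (rule sum_pos[OF fin])
    show "{p \<in> R. dir p = e} \<noteq> {}" using p by blast
  qed (use Nv_pos in auto)
  finally show ?thesis .
qed

lemma AJ_def': "AJ = mat_of_rows n (map (\<lambda>e. f e \<cdot>\<^sub>v e) es)"
  unfolding joint_strategy_def es_def Let_def ..

lemma AJ_carrier: "AJ \<in> carrier_mat (length es) n"
  unfolding AJ_def' using mat_of_rows_carrier(1)[of n "map (\<lambda>e. f e \<cdot>\<^sub>v e) es"] by simp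

lemma AJ_idx: "t < length es \<Longrightarrow> c < n \<Longrightarrow> AJ $$ (t,c) = f (es!t) * (es!t) $ c"
proof -
  assume t: "t < length es" and c: "c < n"
  have "es!t \<in> carrier_vec n" using B_carrier es(2) nth_mem[OF t] by auto
  then show ?thesis unfolding AJ_def' mat_of_rows_def using t c by simp
qed

lemma col_L1_AJ: assumes c: "c < n" shows "col_L1 AJ c = (\<Sum>l\<in>S. s l)"
proof -
  have "col_L1 AJ c = (\<Sum>t<length es. \<bar>f (es!t) * (es!t) $ c\<bar>)"
    unfolding col_L1_def using AJ_carrier AJ_idx c by simp
  also have "\<dots> = (\<Sum>e\<in>B. \<bar>f e * e $ c\<bar>)"
    using sum_nth_distinct[OF es(1), of "\<lambda>e. \<bar>f e * e $ c\<bar>"] es(2) by simp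
  also have "\<dots> = (\<Sum>e\<in>B. \<Sum>p\<in>{p \<in> R. dir p = e}. \<bar>v p $ c\<bar>)"
  proof (rule sum.cong[OF refl])
    fix e assume e: "e \<in> B"
    have "\<bar>f e * e $ c\<bar> = f e * \<bar>e $ c\<bar>" using f_pos[OF e] by (simp add: abs_mult)
    also have "\<dots> = (\<Sum>p\<in>{p \<in> R. dir p = e}. N (v p) * \<bar>e $ c\<bar>)"
      unfolding wf_weight_def by (simp add: sum_distrib_right)
    also have "\<dots> = (\<Sum>p\<in>{p \<in> R. dir p = e}. \<bar>v p $ c\<bar>)"
    proof (rule sum.cong[OF refl])
      fix p assume "p \<in> {p \<in> R. dir p = e}"
      then have p: "p \<in> R" "dir p = e" by auto
      have "N (v p) * \<bar>e $ c\<bar> = N (v p) * (\<bar>v p $ c\<bar> / N (v p))"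
        using p dir_idx[OF p(1) c] Nv_pos[OF p(1)] by simp
      also have "\<dots> = \<bar>v p $ c\<bar>" using Nv_pos[OF p(1)] by simp
      finally show "N (v p) * \<bar>e $ c\<bar> = \<bar>v p $ c\<bar>" .
    qed
    finally show "\<bar>f e * e $ c\<bar> = (\<Sum>p\<in>{p \<in> R. dir p = e}. \<bar>v p $ c\<bar>)" .
  qed
  also have "\<dots> = (\<Sum>p\<in>R. \<bar>v p $ c\<bar>)"
    unfolding wf_buckets_def using sum.image_gen[OF R_fin, of "\<lambda>p. \<bar>v p $ c\<bar>" dir]
    by (simp add: conj_commute)
  also have "\<dots> = (\<Sum>p\<in>(SIGMA l:S. {..<dim_row (A l)}). (case p of (l,k) \<Rightarrow> \<bar>s l * A l $$ (k, c)\<bar>))"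
  proof (rule sum.mono_neutral_cong_left)
    show "finite (SIGMA l:S. {..<dim_row (A l)})" using finS by (auto intro: finite_SigmaI)
    show "R \<subseteq> (SIGMA l:S. {..<dim_row (A l)})" by (rule R_sub)
    show "\<forall>p\<in>(SIGMA l:S. {..<dim_row (A l)}) - R. (case p of (l,k) \<Rightarrow> \<bar>s l * A l $$ (k, c)\<bar>) = 0"
    proof
      fix p assume p: "p \<in> (SIGMA l:S. {..<dim_row (A l)}) - R"
      then obtain l k where lk: "p = (l,k)" "l \<in> S" "k < dim_row (A l)" by auto
      then have "row (s l \<cdot>\<^sub>m A l) k = 0\<^sub>v (dim_col (A l))" using p unfolding wf_rows_def by auto
      then have "row (s l \<cdot>\<^sub>m A l) k $ c = 0" using c A_dim[OF lk(2)] by simp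
      then show "(case p of (l,k) \<Rightarrow> \<bar>s l * A l $$ (k, c)\<bar>) = 0" using lk c A_dim[OF lk(2)] by simp
    qed
    show "\<And>p. p \<in> R \<Longrightarrow> \<bar>v p $ c\<bar> = (case p of (l,k) \<Rightarrow> \<bar>s l * A l $$ (k, c)\<bar>)"
      using v_idx c by auto
  qed
  also have "\<dots> = (\<Sum>l\<in>S. \<Sum>k<dim_row (A l). \<bar>s l * A l $$ (k, c)\<bar>)"
    by (subst sum.Sigma) (use finS in auto)
  also have "\<dots> = (\<Sum>l\<in>S. s l * col_L1 (A l) c)"
    unfolding col_L1_def using s_pos[THEN abs_of_pos] by (intro sum.cong refl) (auto simp: abs_mult sum_distrib_left)
  also have "\<dots> = (\<Sum>l\<in>S. s l)" using A_cols c by simp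
  finally show ?thesis .
qed

lemma L1_AJ: assumes "n > 0" shows "L1_sens AJ = (\<Sum>l\<in>S. s l)"
proof -
  have "{col_L1 AJ c | c. c < dim_col AJ} = {\<Sum>l\<in>S. s l}"
  proof -
    have d: "dim_col AJ = n" using AJ_carrier by simp
    have "{col_L1 AJ c | c. c < dim_col AJ} = {x. \<exists>c. x = col_L1 AJ c \<and> c < n}" using d by auto
    also have "\<dots> = {\<Sum>l\<in>S. s l}" using col_L1_AJ assms by force
    finally show ?thesis .
  qed
  then show ?thesis unfolding L1_sens_def by simp
qed

lemma C_exists: assumes l: "l \<in> S"
  shows "\<exists>C \<in> carrier_mat (dim_row (A l)) (length es). C * AJ = A l"
proof -
  define C where "C = mat (dim_row (A l)) (length es) (\<lambda>(r,t).
     if (l,r) \<in> R \<and> es!t = dir (l,r) then N (v (l,r)) / (s l * f (es!t)) else 0)"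
  have C: "C \<in> carrier_mat (dim_row (A l)) (length es)" unfolding C_def by simp
  have "C * AJ = A l"
  proof (rule eq_matI)
    fix r c assume rc: "r < dim_row (A l)" "c < dim_col (A l)"
    then have c: "c < n" using A_dim[OF l] by simp
    have "(C * AJ) $$ (r,c) = (\<Sum>t<length es. C $$ (r,t) * AJ $$ (t,c))"
      using C AJ_carrier rc c by (auto simp: scalar_prod_def atLeast0LessThan)
    also have "\<dots> = (\<Sum>t<length es. (if (l,r) \<in> R \<and> es!t = dir (l,r)
        then N (v (l,r)) / (s l * f (es!t)) * (f (es!t) * (es!t) $ c) else 0))"
      using rc c AJ_idx unfolding C_def by (intro sum.cong refl) auto
    also have "\<dots> = (\<Sum>e\<in>B. (if (l,r) \<in> R \<and> e = dir (l,r)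
        then N (v (l,r)) / (s l * f e) * (f e * e $ c) else 0))"
      using sum_nth_distinct[OF es(1), of "\<lambda>e. (if (l,r) \<in> R \<and> e = dir (l,r)
        then N (v (l,r)) / (s l * f e) * (f e * e $ c) else 0)"] es(2) by simp
    also have "\<dots> = A l $$ (r,c)"
    proof (cases "(l,r) \<in> R")
      case True
      have dB: "dir (l,r) \<in> B" unfolding wf_buckets_def using True by simp
      have "(\<Sum>e\<in>B. (if (l,r) \<in> R \<and> e = dir (l,r)
        then N (v (l,r)) / (s l * f e) * (f e * e $ c) else 0))
        = N (v (l,r)) / (s l * f (dir (l,r))) * (f (dir (l,r)) * dir (l,r) $ c)"
        using True dB B_fin by (simp add: sum.delta')
      also have "\<dots> = N (v (l,r)) / s l * (v (l,r) $ c / N (v (l,r)))"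
        using f_pos[OF dB] dir_idx[OF True c] s_pos[OF l] by (simp add: field_simps)
      also have "\<dots> = v (l,r) $ c / s l" using Nv_pos[OF True] by (simp add: field_simps)
      also have "\<dots> = A l $$ (r,c)" using v_idx[OF True c] s_pos[OF l] by simp
      finally show ?thesis .
    next
      case False
      then have "row (s l \<cdot>\<^sub>m A l) r = 0\<^sub>v (dim_col (A l))" using l rc unfolding wf_rows_def by auto
      then have "row (s l \<cdot>\<^sub>m A l) r $ c = 0" using rc by simp
      then have "A l $$ (r,c) = 0" using rc s_pos[OF l] by simp
      then show ?thesis using False by simp
    qed
    finally show "(C * AJ) $$ (r,c) = A l $$ (r,c)" .
  qed (use C AJ_carrier A_dim[OF l] in auto)
  then show ?thesis using C by blast
qed

end



lemma frob_sq_rows: "frob_sq M = (\<Sum>r<dim_row M. \<Sum>c<dim_col M. (M $$ (r,c))\<^sup>2)"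
  unfolding frob_sq_def ..

lemma frob_proj:
  fixes Z P :: "real mat"
  assumes Z: "Z \<in> carrier_mat r m" and P: "P \<in> carrier_mat m m"
    and sym: "transpose_mat P = P" and idem: "P * P = P"
  shows "frob_sq (Z * P) \<le> frob_sq Z"
proof -
  have d: "dim_row (Z*P) = r" "dim_col (Z*P) = m" using Z P by auto
  have dZ: "dim_row Z = r" "dim_col Z = m" using Z by auto
  have "frob_sq (Z * P) = (\<Sum>i<r. \<Sum>c<m. ((Z*P) $$ (i,c))\<^sup>2)"
    unfolding frob_sq_def d ..
  also have "\<dots> \<le> (\<Sum>i<r. \<Sum>c<m. (Z $$ (i,c))\<^sup>2)"
  proof (rule sum_mono)
    fix i assume i: "i \<in> {..<r}"
    define z where "z = row Z i"
    have z: "z \<in> carrier_vec m" unfolding z_def using row_carrier[of Z i] unfolding dZ .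
    define u where "u = P *\<^sub>v z"
    have u: "u \<in> carrier_vec m" unfolding u_def by (rule mult_mat_vec_carrier[OF P z])
    have ZPu: "(Z*P) $$ (i,c) = u $ c" if c: "c < m" for c
    proof -
      have ii: "i < dim_row Z" using i dZ by simp
      have cc: "c < dim_col P" using c P by simp
      have "(Z*P) $$ (i,c) = row Z i \<bullet> col P c" by (rule index_mult_mat(1)[OF ii cc])
      also have "col P c = row P c"
      proof -
        have "row (transpose_mat P) c = col P c" by (rule row_transpose[OF cc])
        then show ?thesis unfolding sym by simp
      qed
      also have "row Z i \<bullet> row P c = row P c \<bullet> row Z i"
        by (rule comm_scalar_prod[OF z[unfolded z_def] row_carrier_vec[OF c P]])
      also have "\<dots> = u $ c" unfolding u_def z_def
        by (rule index_mult_mat_vec[symmetric]) (use P c in simp)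
      finally show ?thesis .
    qed
    have Zz: "Z $$ (i,c) = z $ c" if "c < m" for c
      unfolding z_def using i that dZ by simp
    have uu: "u \<bullet> u = u \<bullet> z"
    proof -
      have t: "(transpose_mat P *\<^sub>v u) \<bullet> z = u \<bullet> (P *\<^sub>v z)"
        by (rule transpose_vec_mult_scalar[OF P z u])
      have "u \<bullet> u = u \<bullet> (P *\<^sub>v z)" unfolding u_def ..
      also have "\<dots> = (transpose_mat P *\<^sub>v u) \<bullet> z" by (rule t[symmetric])
      also have "transpose_mat P *\<^sub>v u = u"
      proof -
        have "transpose_mat P *\<^sub>v u = P *\<^sub>v (P *\<^sub>v z)" unfolding sym u_def ..
        also have "\<dots> = (P * P) *\<^sub>v z" by (rule assoc_mult_mat_vec[OF P P z, symmetric])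
        also have "\<dots> = u" unfolding idem u_def ..
        finally show ?thesis .
      qed
      finally show ?thesis .
    qed
    have s1: "(\<Sum>c<m. u$c * u$c) = (\<Sum>c<m. u$c * z$c)"
      using uu u z unfolding scalar_prod_def by (simp add: atLeast0LessThan)
    have "(\<Sum>c<m. (z$c)\<^sup>2) - (\<Sum>c<m. (u$c)\<^sup>2) = (\<Sum>c<m. (z$c - u$c)\<^sup>2)"
    proof -
      have "(\<Sum>c<m. (z$c - u$c)\<^sup>2) = (\<Sum>c<m. (z$c)\<^sup>2 + u$c * u$c - 2 * (u$c * z$c))"
        by (intro sum.cong refl) (simp add: power2_eq_square algebra_simps)
      also have "\<dots> = (\<Sum>c<m. (z$c)\<^sup>2) + (\<Sum>c<m. u$c * u$c) - 2 * (\<Sum>c<m. u$c * z$c)"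
        by (simp add: sum.distrib sum_subtractf sum_distrib_left)
      finally have "(\<Sum>c<m. (z$c - u$c)\<^sup>2) = (\<Sum>c<m. (z$c)\<^sup>2) + (\<Sum>c<m. u$c * u$c) - 2 * (\<Sum>c<m. u$c * z$c)" .
      then show ?thesis using s1 by (simp add: power2_eq_square)
    qed
    moreover have "(\<Sum>c<m. (z$c - u$c)\<^sup>2) \<ge> 0" by (intro sum_nonneg) auto
    ultimately have "(\<Sum>c<m. (u$c)\<^sup>2) \<le> (\<Sum>c<m. (z$c)\<^sup>2)" by linarith
    then show "(\<Sum>c<m. ((Z*P) $$ (i,c))\<^sup>2) \<le> (\<Sum>c<m. (Z $$ (i,c))\<^sup>2)"
      using ZPu Zz by simp
  qed
  also have "\<dots> = frob_sq Z" unfolding frob_sq_def dZ ..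
  finally show ?thesis .
qed

lemma swap_aux: fixes a :: "'x \<Rightarrow> real"
  shows "(\<Sum>t'\<in>B. \<Sum>t\<in>A. a t * b t t') = (\<Sum>t\<in>A. a t * (\<Sum>t'\<in>B. b t t'))"
  by (subst sum.swap) (simp add: sum_distrib_left)

lemma frob_D:
  fixes Z D :: "real mat"
  assumes Z: "Z \<in> carrier_mat r k" and D: "D \<in> carrier_mat k k'"
    and uniq: "\<And>t' t1 t2. t' < k' \<Longrightarrow> t1 < k \<Longrightarrow> t2 < k \<Longrightarrow> D $$ (t1,t') \<noteq> 0 \<Longrightarrow> D $$ (t2,t') \<noteq> 0 \<Longrightarrow> t1 = t2"
    and rows: "\<And>t. t < k \<Longrightarrow> (\<Sum>t'<k'. (D $$ (t,t'))\<^sup>2) \<le> 1"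
  shows "frob_sq (Z * D) \<le> frob_sq Z"
proof -
  have sq: "((Z*D) $$ (i,t'))\<^sup>2 = (\<Sum>t<k. (Z $$ (i,t))\<^sup>2 * (D $$ (t,t'))\<^sup>2)"
    if i: "i < r" and t': "t' < k'" for i t'
  proof -
    have e: "(Z*D) $$ (i,t') = (\<Sum>t<k. Z $$ (i,t) * D $$ (t,t'))"
      using Z D i t' by (simp add: scalar_prod_def atLeast0LessThan)
    show ?thesis
    proof (cases "\<exists>t0<k. D $$ (t0,t') \<noteq> 0")
      case True
      then obtain t0 where t0: "t0 < k" "D $$ (t0,t') \<noteq> 0" by blast
      have z: "D $$ (t,t') = 0" if "t < k" "t \<noteq> t0" for t
        using uniq[OF t' that(1) t0(1)] t0(2) that(2) by blast
      have "(\<Sum>t<k. Z $$ (i,t) * D $$ (t,t')) = Z $$ (i,t0) * D $$ (t0,t')"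
        by (rule sum_single_nz) (use t0 z in auto)
      moreover have "(\<Sum>t<k. (Z $$ (i,t))\<^sup>2 * (D $$ (t,t'))\<^sup>2) = (Z $$ (i,t0))\<^sup>2 * (D $$ (t0,t'))\<^sup>2"
        by (rule sum_single_nz) (use t0 z in auto)
      ultimately show ?thesis using e by (simp add: power_mult_distrib)
    next
      case False
      then have "\<forall>t\<in>{..<k}. D $$ (t,t') = 0" by auto
      then show ?thesis using e by simp
    qed
  qed
  have d: "dim_row (Z*D) = r" "dim_col (Z*D) = k'" using Z D by auto
  have dZ: "dim_row Z = r" "dim_col Z = k" using Z by auto
  have "frob_sq (Z * D) = (\<Sum>i<r. \<Sum>t'<k'. ((Z*D) $$ (i,t'))\<^sup>2)"
    unfolding frob_sq_def d ..
  also have "\<dots> = (\<Sum>i<r. \<Sum>t'<k'. \<Sum>t<k. (Z $$ (i,t))\<^sup>2 * (D $$ (t,t'))\<^sup>2)"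
    using sq by simp
  also have "\<dots> = (\<Sum>i<r. \<Sum>t<k. (Z $$ (i,t))\<^sup>2 * (\<Sum>t'<k'. (D $$ (t,t'))\<^sup>2))"
    by (intro sum.cong refl swap_aux)
  also have "\<dots> \<le> (\<Sum>i<r. \<Sum>t<k. (Z $$ (i,t))\<^sup>2)"
    by (intro sum_mono mult_left_le rows) auto
  also have "\<dots> = frob_sq Z" unfolding frob_sq_def dZ ..
  finally show ?thesis .
qed



lemma frob_zero:
  assumes "X \<in> carrier_mat 0 k"
  shows "frob_sq (W * X) = 0"
proof -
  have "(W * X) $$ (r,c) = 0" if "r < dim_row W" "c < k" for r c
    using assms that by (simp add: scalar_prod_def)
  then show ?thesis unfolding frob_sq_def using assms by simp
qed

theorem mainTheorem1:
  fixes n :: nat and N :: "real vec \<Rightarrow> real" and \<epsilon> :: real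
    and s :: "'a \<Rightarrow> real" and W A :: "'a \<Rightarrow> real mat"
    and S :: "'a set" and i j :: 'a
  assumes norm: "is_row_norm n N"
    and eps: "\<epsilon> > 0"
    and finS: "finite S" and neS: "S \<noteq> {}" and jS: "j \<notin> S"
    and W_dim: "\<And>l. l \<in> insert j S \<Longrightarrow> dim_col (W l) = n"
    and A_dim: "\<And>l. l \<in> insert j S \<Longrightarrow> dim_col (A l) = n"
    and s_pos: "\<And>l. l \<in> insert j S \<Longrightarrow> s l > 0"
    and W_span: "\<And>l. l \<in> insert j S \<Longrightarrow> W l = W l * pinv (A l) * A l"
    and A_cols: "\<And>l c. l \<in> insert j S \<Longrightarrow> c < n \<Longrightarrow> col_L1 (A l) c = 1"
    and iS: "i \<in> S"
  shows "wf_err n N \<epsilon> s W A (insert j S) i \<le> wf_err n N \<epsilon> s W A S i"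
proof -
  interpret W1: wf_setup n N s A S
    using norm finS A_dim s_pos A_cols by unfold_locales auto
  interpret W2: wf_setup n N s A "insert j S"
    using norm finS A_dim s_pos A_cols by unfold_locales auto
  define es1 where "es1 = W1.es"
  define es2 where "es2 = W2.es"
  define k1 where "k1 = length es1"
  define k2 where "k2 = length es2"
  define AJ1 where "AJ1 = joint_strategy n N s A S"
  define AJ2 where "AJ2 = joint_strategy n N s A (insert j S)"
  define f1 where "f1 = wf_weight N s A S"
  define f2 where "f2 = wf_weight N s A (insert j S)"
  define B1 where "B1 = wf_buckets N s A S"
  define B2 where "B2 = wf_buckets N s A (insert j S)"
  have AJ1: "AJ1 \<in> carrier_mat k1 n" unfolding AJ1_def k1_def es1_def by (rule W1.AJ_carrier)
  have AJ2: "AJ2 \<in> carrier_mat k2 n" unfolding AJ2_def k2_def es2_def by (rule W2.AJ_carrier)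
  have es1: "distinct es1" "set es1 = B1" unfolding es1_def B1_def using W1.es by auto
  have es2: "distinct es2" "set es2 = B2" unfolding es2_def B2_def using W2.es by auto
  have AJ1_idx: "AJ1 $$ (t,c) = f1 (es1!t) * (es1!t) $ c" if "t < k1" "c < n" for t c
    unfolding AJ1_def f1_def es1_def using W1.AJ_idx that unfolding k1_def es1_def by blast
  have AJ2_idx: "AJ2 $$ (t,c) = f2 (es2!t) * (es2!t) $ c" if "t < k2" "c < n" for t c
    unfolding AJ2_def f2_def es2_def using W2.AJ_idx that unfolding k2_def es2_def by blast
  have R12: "wf_rows s A S \<subseteq> wf_rows s A (insert j S)" unfolding wf_rows_def by blast
  have B12: "B1 \<subseteq> B2" unfolding B1_def B2_def wf_buckets_def using R12 by (rule image_mono)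
  have f1_pos: "f1 e > 0" if "e \<in> B1" for e using W1.f_pos that unfolding f1_def B1_def by blast
  have f12: "f1 e \<le> f2 e" if "e \<in> B1" for e
  proof -
    have "f1 e = (\<Sum>p\<in>{p \<in> wf_rows s A S. wf_dir N s A p = e}. N (wf_vec s A p))"
      unfolding f1_def wf_weight_def ..
    also have "\<dots> \<le> (\<Sum>p\<in>{p \<in> wf_rows s A (insert j S). wf_dir N s A p = e}. N (wf_vec s A p))"
    proof (rule sum_mono2)
      show "finite {p \<in> wf_rows s A (insert j S). wf_dir N s A p = e}" using W2.R_fin by simp
      show "{p \<in> wf_rows s A S. wf_dir N s A p = e} \<subseteq> {p \<in> wf_rows s A (insert j S). wf_dir N s A p = e}"
        using R12 by blast
      show "0 \<le> N (wf_vec s A p)" if "p \<in> {p \<in> wf_rows s A (insert j S). wf_dir N s A p = e} -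
          {p \<in> wf_rows s A S. wf_dir N s A p = e}" for p
        using that W2.N_nonneg W2.v_carrier by blast
    qed
    also have "\<dots> = f2 e" unfolding f2_def wf_weight_def ..
    finally show ?thesis .
  qed
  define D where "D = mat k1 k2 (\<lambda>(t,t'). if es1!t = es2!t' then f1 (es1!t) / f2 (es1!t) else 0)"
  have D: "D \<in> carrier_mat k1 k2" unfolding D_def by simp
  have DAJ: "D * AJ2 = AJ1"
  proof (rule eq_matI)
    fix t c assume tc: "t < dim_row AJ1" "c < dim_col AJ1"
    then have t: "t < k1" and c: "c < n" using AJ1 by auto
    define e where "e = es1!t"
    have eB1: "e \<in> B1" unfolding e_def using es1 t k1_def by auto
    then have eB2: "e \<in> B2" using B12 by auto
    have "(D * AJ2) $$ (t,c) = (\<Sum>t'<k2. D $$ (t,t') * AJ2 $$ (t',c))"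
      using D AJ2 t c by (simp add: scalar_prod_def atLeast0LessThan)
    also have "\<dots> = (\<Sum>t'<k2. (if e = es2!t' then f1 e / f2 e * (f2 (es2!t') * (es2!t') $ c) else 0))"
      by (intro sum.cong refl) (simp add: D_def t c AJ2_idx e_def)
    also have "\<dots> = (\<Sum>x\<in>B2. (if e = x then f1 e / f2 e * (f2 x * x $ c) else 0))"
      using sum_nth_distinct[OF es2(1), of "\<lambda>x. (if e = x then f1 e / f2 e * (f2 x * x $ c) else 0)"]
      es2(2) unfolding k2_def by simp
    also have "\<dots> = f1 e / f2 e * (f2 e * e $ c)" using eB2 W2.B_fin unfolding B2_def
      by (simp add: sum.delta)
    also have "\<dots> = f1 e * e $ c" using f1_pos[OF eB1] f12[OF eB1] by simp
    also have "\<dots> = AJ1 $$ (t,c)" using AJ1_idx[OF t c] e_def by simp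
    finally show "(D * AJ2) $$ (t,c) = AJ1 $$ (t,c)" .
  qed (use D AJ1 AJ2 in auto)
  have D_uniq: "t1 = t2" if "t' < k2" "t1 < k1" "t2 < k1" "D $$ (t1,t') \<noteq> 0" "D $$ (t2,t') \<noteq> 0"
    for t' t1 t2
  proof -
    have "es1!t1 = es2!t'" "es1!t2 = es2!t'" using that unfolding D_def by (auto split: if_splits)
    then have "es1!t1 = es1!t2" by simp
    then show ?thesis using nth_eq_iff_index_eq[OF es1(1)] that unfolding k1_def by blast
  qed
  have D_rows: "(\<Sum>t'<k2. (D $$ (t,t'))\<^sup>2) \<le> 1" if t: "t < k1" for t
  proof -
    define e where "e = es1!t"
    have eB1: "e \<in> B1" unfolding e_def using es1 t k1_def by auto
    then have eB2: "e \<in> B2" using B12 by auto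
    have "(\<Sum>t'<k2. (D $$ (t,t'))\<^sup>2) = (\<Sum>t'<k2. (if e = es2!t' then (f1 e / f2 e)\<^sup>2 else 0))"
      by (intro sum.cong refl) (simp add: D_def t e_def)
    also have "\<dots> = (\<Sum>x\<in>B2. (if e = x then (f1 e / f2 e)\<^sup>2 else 0))"
      using sum_nth_distinct[OF es2(1), of "\<lambda>x. (if e = x then (f1 e / f2 e)\<^sup>2 else 0)"]
      es2(2) unfolding k2_def by simp
    also have "\<dots> = (f1 e / f2 e)\<^sup>2" using eB2 W2.B_fin unfolding B2_def by (simp add: sum.delta)
    also have "\<dots> \<le> 1"
    proof -
      have "0 \<le> f1 e / f2 e" "f1 e / f2 e \<le> 1" using f1_pos[OF eB1] f12[OF eB1] by auto
      then show ?thesis by (simp add: power_le_one)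
    qed
    finally show ?thesis .
  qed
  define Wi where "Wi = W i"
  define mi where "mi = dim_row Wi"
  have iS': "i \<in> insert j S" using iS by simp
  have Wi: "Wi \<in> carrier_mat mi n" unfolding mi_def Wi_def using W_dim[OF iS'] by auto
  define Ai where "Ai = A i"
  define ri where "ri = dim_row Ai"
  have Ai: "Ai \<in> carrier_mat ri n" unfolding ri_def Ai_def using A_dim[OF iS'] by auto
  define Xi where "Xi = pinv Ai"
  have Xi: "Xi \<in> carrier_mat n ri"
    using pinv_is_pinv[of Ai] Ai unfolding is_pinv_def Xi_def by auto
  have Wspan: "Wi = Wi * Xi * Ai" unfolding Wi_def Xi_def Ai_def by (rule W_span[OF iS'])
  define X1 where "X1 = pinv AJ1"
  have X1: "X1 \<in> carrier_mat n k1" and AXA1: "AJ1 * X1 * AJ1 = AJ1"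
    using pinv_is_pinv[of AJ1] AJ1 unfolding is_pinv_def X1_def by auto
  define X2 where "X2 = pinv AJ2"
  have X2: "X2 \<in> carrier_mat n k2" and AXA2: "AJ2 * X2 * AJ2 = AJ2"
    and sym2: "transpose_mat (AJ2 * X2) = AJ2 * X2"
    using pinv_is_pinv[of AJ2] AJ2 unfolding is_pinv_def X2_def by auto
  obtain C where C: "C \<in> carrier_mat ri k1" and CA: "C * AJ1 = Ai"
    using W1.C_exists[OF iS] unfolding ri_def Ai_def k1_def es1_def AJ1_def by blast
  have h1: "Ai * X1 * AJ1 = Ai"
  proof -
    have "Ai * X1 * AJ1 = C * AJ1 * X1 * AJ1" unfolding CA ..
    also have "\<dots> = C * (AJ1 * X1) * AJ1" using assoc_mult_mat[OF C AJ1 X1] by simp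
    also have "\<dots> = C * (AJ1 * X1 * AJ1)"
      using assoc_mult_mat[OF C mult_carrier_mat[OF AJ1 X1] AJ1] by simp
    also have "\<dots> = Ai" unfolding AXA1 CA ..
    finally show ?thesis .
  qed
  have h2: "Wi * X1 * AJ1 = Wi"
  proof -
    have "Wi * X1 * AJ1 = Wi * Xi * Ai * X1 * AJ1"
      using arg_cong[OF Wspan, of "\<lambda>M. M * X1 * AJ1"] by simp
    also have "\<dots> = Wi * Xi * (Ai * X1) * AJ1"
      using assoc_mult_mat[OF mult_carrier_mat[OF Wi Xi] Ai X1] by simp
    also have "\<dots> = Wi * Xi * (Ai * X1 * AJ1)"
      using assoc_mult_mat[OF mult_carrier_mat[OF Wi Xi] mult_carrier_mat[OF Ai X1] AJ1] by simp
    also have "\<dots> = Wi * Xi * Ai" unfolding h1 ..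
    also have "\<dots> = Wi" using Wspan by simp
    finally show ?thesis .
  qed
  define Z0 where "Z0 = Wi * X1"
  have Z0: "Z0 \<in> carrier_mat mi k1" unfolding Z0_def using Wi X1 by simp
  define Z' where "Z' = Z0 * D"
  have Z': "Z' \<in> carrier_mat mi k2" unfolding Z'_def using Z0 D by simp
  have h3: "Z' * AJ2 = Wi"
  proof -
    have "Z' * AJ2 = Z0 * (D * AJ2)" unfolding Z'_def by (rule assoc_mult_mat[OF Z0 D AJ2])
    also have "\<dots> = Wi" unfolding DAJ Z0_def by (rule h2)
    finally show ?thesis .
  qed
  define P2 where "P2 = AJ2 * X2"
  have P2: "P2 \<in> carrier_mat k2 k2" unfolding P2_def using AJ2 X2 by simp
  have P2sym: "transpose_mat P2 = P2" unfolding P2_def by (rule sym2)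
  have P2idem: "P2 * P2 = P2"
  proof -
    have "P2 * P2 = AJ2 * X2 * AJ2 * X2" unfolding P2_def
      using assoc_mult_mat[OF mult_carrier_mat[OF AJ2 X2] AJ2 X2] by simp
    also have "\<dots> = P2" unfolding AXA2 P2_def ..
    finally show ?thesis .
  qed
  have h4: "Wi * X2 = Z' * P2"
  proof -
    have "Wi * X2 = Z' * AJ2 * X2" unfolding h3 ..
    also have "\<dots> = Z' * P2" unfolding P2_def by (rule assoc_mult_mat[OF Z' AJ2 X2])
    finally show ?thesis .
  qed
  have F: "frob_sq (Wi * X2) \<le> frob_sq (Wi * X1)"
  proof -
    have "frob_sq (Wi * X2) = frob_sq (Z' * P2)" unfolding h4 ..
    also have "\<dots> \<le> frob_sq Z'" by (rule frob_proj[OF Z' P2 P2sym P2idem])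
    also have "\<dots> \<le> frob_sq Z0" unfolding Z'_def
      by (rule frob_D[OF Z0 D D_uniq D_rows]) auto
    finally show ?thesis unfolding Z0_def .
  qed
  have unf: "wf_err n N \<epsilon> s W A T i =
      2 * (L1_sens (joint_strategy n N s A T))\<^sup>2 / ((\<Sum>l\<in>T. s l) * \<epsilon>)\<^sup>2 * frob_sq (W i * pinv (joint_strategy n N s A T))"
    for T unfolding wf_err_def Let_def ..
  show ?thesis
  proof (cases "n = 0")
    case True
    have "frob_sq (Wi * X2) = 0" using X2 True by (intro frob_zero) simp
    moreover have "frob_sq (Wi * X1) = 0" using X1 True by (intro frob_zero) simp
    ultimately show ?thesis unfolding unf using Wi_def X1_def X2_def AJ1_def AJ2_def by simp
  next
    case False
    then have n: "n > 0" by simp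
    have pre: "2 * (L1_sens (joint_strategy n N s A T))\<^sup>2 / ((\<Sum>l\<in>T. s l) * \<epsilon>)\<^sup>2 = 2 / \<epsilon>\<^sup>2"
      if "wf_setup n N s A T" "T \<noteq> {}" for T
    proof -
      interpret WT: wf_setup n N s A T by (rule that(1))
      have L: "L1_sens (joint_strategy n N s A T) = (\<Sum>l\<in>T. s l)" by (rule WT.L1_AJ[OF n])
      have "(\<Sum>l\<in>T. s l) > 0" using WT.finS that(2) WT.s_pos by (intro sum_pos) auto
      then show ?thesis unfolding L using eps by (simp add: power_mult_distrib)
    qed
    have p1: "2 * (L1_sens AJ1)\<^sup>2 / ((\<Sum>l\<in>S. s l) * \<epsilon>)\<^sup>2 = 2 / \<epsilon>\<^sup>2"
      unfolding AJ1_def by (rule pre) (use W1.wf_setup_axioms neS in auto)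
    have p2: "2 * (L1_sens AJ2)\<^sup>2 / ((\<Sum>l\<in>insert j S. s l) * \<epsilon>)\<^sup>2 = 2 / \<epsilon>\<^sup>2"
      unfolding AJ2_def by (rule pre) (use W2.wf_setup_axioms in auto)
    have "wf_err n N \<epsilon> s W A (insert j S) i = 2 / \<epsilon>\<^sup>2 * frob_sq (Wi * X2)"
      unfolding unf p2[unfolded AJ2_def] Wi_def X2_def AJ2_def ..
    also have "\<dots> \<le> 2 / \<epsilon>\<^sup>2 * frob_sq (Wi * X1)" using F by (intro mult_left_mono) auto
    also have "\<dots> = wf_err n N \<epsilon> s W A S i"
      unfolding unf p1[unfolded AJ1_def] Wi_def X1_def AJ1_def ..
    finally show ?thesis .
  qed
qed


end
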